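(* Let $\theta\in\mathcal{D}(\mathcal{X})$, let $\kappa>0$ be a threshold for a fairness property $\psi$, and let $T>0$ be a time horizon. For a trace $\tau\in(\mathcal{X}\times\mathcal{Y})^{\le T}$ let $v(\tau)=\min_{\pi\in\Pi_{\mathtt{fair}}^{\theta,(T-|\tau|)\mid\tau}}\mathbb{E}[\mathit{cost}\mid\tau;\theta,\pi,T-|\tau|]$. Then for $|\tau|=T$, $v(\tau)=0$ if $\psi(\tau)\le\kappa$ and $v(\tau)=\infty$ otherwise; for $|\tau|<T$, $v(\tau)=\sum_{x=(g,r,c)\in\mathcal{X}}\theta(x)\cdot\min\{v(\tau\cdot(x,y=r)),\ v(\tau\cdot(x,y\neq r))+c\}$, where $(x,y=r)$ denotes the pair with output equal to $r$ and $(x,y\neq r)$ the pair with output $1-r$; and the shield $\pi^*(\tau,x)=\arg\min_{y\in\mathcal{Y}}v(\tau\cdot(x,y))$ satisfies $\pi^*=\arg\min_{\pi\in\Pi_{\mathtt{fair}}^{\theta,T}}\mathbb{E}[\mathit{cost};\theta,\pi,T]$.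
   Context: Let $\mathcal{G}=\{a,b\}$ (groups), $\mathbb{B}=\{0,1\}$ (1 = accept), $\mathbb{C}\subset\mathbb{R}_{\ge0}$ finite (costs); input space $\mathcal{X}=\mathcal{G}\times\mathbb{B}\times\mathbb{C}$, an input $x=(g,r,c)$ consisting of group, recommended decision and intervention cost; output space $\mathcal{Y}=\mathbb{B}$. A shield is $\pi:(\mathcal{X}\times\mathcal{Y})^*\times\mathcal{X}\to\mathcal{Y}$; $\Pi^t$ denotes shields defined on $(\mathcal{X}\times\mathcal{Y})^{\le t}\times\mathcal{X}$. $\mathtt{FT}^t_{\theta,\pi}$ is the set of traces $(x_1,y_1)\dots(x_t,y_t)$ with $\theta(x_i)>0$ and $y_i=\pi((x_1,y_1)\dots(x_{i-1},y_{i-1}),x_i)$. $\mathbb{P}(\tau;\theta,\pi)=\prod_i\theta(x_i)$ if $\tau\in\mathtt{FT}^t_{\theta,\pi}$ and $0$ otherwise; $\mathbb{P}(\tau'\mid\tau;\theta,\pi)=\mathbb{P}(\tau\tau';\theta,\pi)/\mathbb{P}(\tau;\theta,\pi)$. $\mathit{cost}(\tau)=\sum_i c_i\mathbb{1}[r_i\neq y_i]$ for $x_i=(g_i,r_i,c_i)$. $\mathbb{E}[\mathit{cost};\theta,\pi,t]=\sum_{\tau\in(\mathcal{X}\times\mathcal{Y})^t}\mathit{cost}(\tau)\mathbb{P}(\tau;\theta,\pi)$ and $\mathbb{E}[\mathit{cost}\mid\tau;\theta,\pi,t]=\sum_{\tau'\in(\mathcal{X}\times\mathcal{Y})^t}\mathit{cost}(\tau')\mathbb{P}(\tau'\mid\tau;\theta,\pi)$.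 A fairness property is a map $\psi$ from finite traces to $\mathbb{R}$ (bias). $\Pi_{\mathtt{fair}}^{\theta,T}=\{\pi\in\Pi^T:\forall\tau\in\mathtt{FT}^T_{\theta,\pi},\ \psi(\tau)\le\kappa\}$ and $\Pi_{\mathtt{fair}}^{\theta,t\mid\tau}=\{\pi\in\Pi^t:\forall\tau'\in(\mathcal{X}\times\mathcal{Y})^t,\ \tau\tau'\in\mathtt{FT}^{|\tau|+t}_{\theta,\pi}\Rightarrow\psi(\tau\tau')\le\kappa\}$. *)

theory Defs
  imports Complex_Main "HOL-Library.Extended_Real"
begin

datatype grp = GA | GB

text \<open>Inputs x = (g, r, c): group, recommended decision (True = accept), cost.\<close>
type_synonym inp = "grp \<times> bool \<times> real"
type_synonym trace = "(inp \<times> bool) list"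
type_synonym shield = "trace \<Rightarrow> inp \<Rightarrow> bool"

definition Xs :: "real set \<Rightarrow> inp set" where
  "Xs C = UNIV \<times> UNIV \<times> C"

definition cost :: "trace \<Rightarrow> real" where
  "cost \<tau> = sum_list (map (\<lambda>((g, r, c), y). if r \<noteq> y then c else 0) \<tau>)"

definition FT :: "(inp \<Rightarrow> real) \<Rightarrow> shield \<Rightarrow> nat \<Rightarrow> trace set" where
  "FT \<theta> \<pi> t = {\<tau>. length \<tau> = t \<and>
     (\<forall>i<t. \<theta> (fst (\<tau> ! i)) > 0 \<and> snd (\<tau> ! i) = \<pi> (take i \<tau>) (fst (\<tau> ! i)))}"

definition prob :: "(inp \<Rightarrow> real) \<Rightarrow> shield \<Rightarrow> trace \<Rightarrow> real" where
  "prob \<theta> \<pi> \<tau> = (if \<tau> \<in> FT \<theta> \<pi> (length \<tau>) then (\<Prod>i<length \<tau>. \<theta> (fst (\<tau> ! i))) else 0)"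

definition FTc :: "(inp \<Rightarrow> real) \<Rightarrow> shield \<Rightarrow> trace \<Rightarrow> nat \<Rightarrow> trace set" where
  "FTc \<theta> \<pi> \<tau> t = {\<tau>'. length \<tau>' = t \<and>
     (\<forall>i<t. \<theta> (fst (\<tau>' ! i)) > 0 \<and> snd (\<tau>' ! i) = \<pi> (\<tau> @ take i \<tau>') (fst (\<tau>' ! i)))}"

definition cprob :: "(inp \<Rightarrow> real) \<Rightarrow> shield \<Rightarrow> trace \<Rightarrow> trace \<Rightarrow> real" where
  "cprob \<theta> \<pi> \<tau> \<tau>' = (if \<tau>' \<in> FTc \<theta> \<pi> \<tau> (length \<tau>') then (\<Prod>i<length \<tau>'. \<theta> (fst (\<tau>' ! i))) else 0)"

definition traces :: "real set \<Rightarrow> nat \<Rightarrow> trace set" where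
  "traces C t = {\<tau>. length \<tau> = t \<and> set \<tau> \<subseteq> Xs C \<times> UNIV}"

definition Ecost :: "real set \<Rightarrow> (inp \<Rightarrow> real) \<Rightarrow> shield \<Rightarrow> nat \<Rightarrow> real" where
  "Ecost C \<theta> \<pi> t = (\<Sum>\<tau>\<in>traces C t. cost \<tau> * prob \<theta> \<pi> \<tau>)"

definition Ecost_cond :: "real set \<Rightarrow> (inp \<Rightarrow> real) \<Rightarrow> shield \<Rightarrow> trace \<Rightarrow> nat \<Rightarrow> real" where
  "Ecost_cond C \<theta> \<pi> \<tau> t = (\<Sum>\<tau>'\<in>traces C t. cost \<tau>' * cprob \<theta> \<pi> \<tau> \<tau>')"

definition fair_shields :: "(inp \<Rightarrow> real) \<Rightarrow> (trace \<Rightarrow> real) \<Rightarrow> real \<Rightarrow> nat \<Rightarrow> shield set" where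
  "fair_shields \<theta> \<psi> \<kappa> T = {\<pi>. \<forall>\<tau>\<in>FT \<theta> \<pi> T. \<psi> \<tau> \<le> \<kappa>}"

definition fair_shields_cond :: "(inp \<Rightarrow> real) \<Rightarrow> (trace \<Rightarrow> real) \<Rightarrow> real \<Rightarrow> nat \<Rightarrow> trace \<Rightarrow> shield set" where
  "fair_shields_cond \<theta> \<psi> \<kappa> t \<tau> = {\<pi>. \<forall>\<tau>'. \<tau>' \<in> FTc \<theta> \<pi> \<tau> t \<longrightarrow> \<psi> (\<tau> @ \<tau>') \<le> \<kappa>}"

text \<open>Value function v(tau); the minimum over an empty set of shields is +infinity.\<close>
definition val :: "real set \<Rightarrow> (inp \<Rightarrow> real) \<Rightarrow> (trace \<Rightarrow> real) \<Rightarrow> real \<Rightarrow> nat \<Rightarrow> trace \<Rightarrow> ereal" where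
  "val C \<theta> \<psi> \<kappa> T \<tau> = (INF \<pi> \<in> fair_shields_cond \<theta> \<psi> \<kappa> (T - length \<tau>) \<tau>.
       ereal (Ecost_cond C \<theta> \<pi> \<tau> (T - length \<tau>)))"

definition dev_cost :: "inp \<Rightarrow> bool \<Rightarrow> real" where
  "dev_cost x y = (case x of (g, r, c) \<Rightarrow> if y \<noteq> r then c else 0)"

end

theory Submission
  imports Defs
begin

lemma UNIV_grp: "(UNIV :: grp set) = {GA, GB}"
  using grp.exhaust by auto

lemma finite_grp[simp]: "finite (UNIV :: grp set)"
  by (simp add: UNIV_grp)

lemma finite_Xs: "finite C \<Longrightarrow> finite (Xs C)"
  by (simp add: Xs_def)

lemma finite_traces: "finite C \<Longrightarrow> finite (traces C t)"
proof -
  assume "finite C"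
  then have "finite (Xs C \<times> (UNIV::bool set))" by (simp add: finite_Xs)
  from finite_lists_length_eq[OF this, of t] show ?thesis
    unfolding traces_def by (simp add: conj_commute)
qed

lemma traces_0: "traces C 0 = {[]}"
  by (auto simp: traces_def)

lemma traces_Suc: "traces C (Suc t) = (\<lambda>(p,l). p # l) ` ((Xs C \<times> UNIV) \<times> traces C t)"
proof (rule set_eqI)
  fix l
  show "l \<in> traces C (Suc t) \<longleftrightarrow> l \<in> (\<lambda>(p,l). p # l) ` ((Xs C \<times> UNIV) \<times> traces C t)"
  proof
    assume a: "l \<in> traces C (Suc t)"
    then have "length l = Suc t" by (simp add: traces_def)
    then obtain p l' where pl: "l = p # l'" by (metis length_Suc_conv)
    have "(p, l') \<in> (Xs C \<times> UNIV) \<times> traces C t" using a pl by (auto simp: traces_def)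
    then show "l \<in> (\<lambda>(p,l). p # l) ` ((Xs C \<times> UNIV) \<times> traces C t)"
      using pl by (intro image_eqI[of _ _ "(p, l')"]) auto
  next
    assume "l \<in> (\<lambda>(p,l). p # l) ` ((Xs C \<times> UNIV) \<times> traces C t)"
    then show "l \<in> traces C (Suc t)" by (auto simp: traces_def)
  qed
qed

lemma FTc_0: "FTc \<theta> \<pi> \<tau> 0 = {[]}"
  by (auto simp: FTc_def)

lemma FTc_Cons: "(p # l \<in> FTc \<theta> \<pi> \<tau> (Suc n)) \<longleftrightarrow>
   \<theta> (fst p) > 0 \<and> snd p = \<pi> \<tau> (fst p) \<and> l \<in> FTc \<theta> \<pi> (\<tau> @ [p]) n"
  unfolding FTc_def mem_Collect_eq All_less_Suc2 by (simp add: conj_ac)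

lemma FTc_Suc: "l' \<in> FTc \<theta> \<pi> \<tau> (Suc n) \<longleftrightarrow> (\<exists>p l. l' = p # l \<and>
   \<theta> (fst p) > 0 \<and> snd p = \<pi> \<tau> (fst p) \<and> l \<in> FTc \<theta> \<pi> (\<tau> @ [p]) n)"
proof -
  have "l' \<in> FTc \<theta> \<pi> \<tau> (Suc n) \<Longrightarrow> \<exists>p l. l' = p # l" 
  proof -
    assume "l' \<in> FTc \<theta> \<pi> \<tau> (Suc n)"
    then have "length l' = Suc n" by (simp add: FTc_def)
    then show ?thesis by (metis length_Suc_conv)
  qed
  then show ?thesis
  proof -
    assume e: "l' \<in> FTc \<theta> \<pi> \<tau> (Suc n) \<Longrightarrow> \<exists>p l. l' = p # l"
    show ?thesis
    proof
      assume l: "l' \<in> FTc \<theta> \<pi> \<tau> (Suc n)"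
      then obtain p l where "l' = p # l" using e by blast
      then show "\<exists>p l. l' = p # l \<and> \<theta> (fst p) > 0 \<and> snd p = \<pi> \<tau> (fst p) \<and> l \<in> FTc \<theta> \<pi> (\<tau> @ [p]) n"
        using l FTc_Cons[of p l] by simp
    next
      assume "\<exists>p l. l' = p # l \<and> \<theta> (fst p) > 0 \<and> snd p = \<pi> \<tau> (fst p) \<and> l \<in> FTc \<theta> \<pi> (\<tau> @ [p]) n"
      then obtain p l where "l' = p # l" "\<theta> (fst p) > 0" "snd p = \<pi> \<tau> (fst p)" "l \<in> FTc \<theta> \<pi> (\<tau> @ [p]) n"
        by blast
      then show "l' \<in> FTc \<theta> \<pi> \<tau> (Suc n)" using FTc_Cons[of p l] by simp
    qed
  qed
qed

lemma cprob_Nil: "cprob \<theta> \<pi> \<tau> [] = 1"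
  by (simp add: cprob_def FTc_0)

lemma cprob_Cons:
  assumes "\<forall>x. \<theta> x \<ge> 0"
  shows "cprob \<theta> \<pi> \<tau> (p # l) = (if snd p = \<pi> \<tau> (fst p) then \<theta> (fst p) * cprob \<theta> \<pi> (\<tau> @ [p]) l else 0)"
proof -
  have pr: "(\<Prod>i<length (p # l). \<theta> (fst ((p # l) ! i))) = \<theta> (fst p) * (\<Prod>i<length l. \<theta> (fst (l ! i)))"
    by (simp only: length_Cons prod.lessThan_Suc_shift) simp
  show ?thesis
  proof (cases "\<theta> (fst p) > 0")
    case True
    then show ?thesis unfolding cprob_def using FTc_Cons[of p l \<theta> \<pi> \<tau> "length l"] pr by auto
  next
    case False
    moreover have "\<theta> (fst p) \<ge> 0" using assms by blast
    ultimately have "\<theta> (fst p) = 0" by linarith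
    then show ?thesis unfolding cprob_def using FTc_Cons[of p l \<theta> \<pi> \<tau> "length l"] pr by auto
  qed
qed

lemma cprob_nonneg: "\<forall>x. \<theta> x \<ge> 0 \<Longrightarrow> cprob \<theta> \<pi> \<tau> l \<ge> 0"
proof -
  assume a: "\<forall>x. \<theta> x \<ge> 0"
  have "\<forall>i. \<theta> (fst (l ! i)) \<ge> 0" using a by blast
  then show ?thesis by (auto simp: cprob_def intro!: prod_nonneg)
qed

lemma cost_Cons: "cost ((x, y) # l) = dev_cost x y + cost l"
  by (cases x) (auto simp: cost_def dev_cost_def)

lemma cost_nonneg: "\<forall>c\<in>C. c \<ge> 0 \<Longrightarrow> l \<in> traces C t \<Longrightarrow> cost l \<ge> 0"
  unfolding cost_def traces_def Xs_def
  by (intro sum_list_nonneg) auto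

lemma locality:
  assumes "\<And>h z. \<pi>1 (\<tau> @ h) z = \<pi>2 (\<tau> @ h) z"
  shows "FTc \<theta> \<pi>1 \<tau> n = FTc \<theta> \<pi>2 \<tau> n"
  using assms by (simp add: FTc_def)

lemma locality_Ecost:
  assumes "\<And>h z. \<pi>1 (\<tau> @ h) z = \<pi>2 (\<tau> @ h) z"
  shows "Ecost_cond C \<theta> \<pi>1 \<tau> n = Ecost_cond C \<theta> \<pi>2 \<tau> n"
    and "(\<pi>1 \<in> fair_shields_cond \<theta> \<psi> \<kappa> n \<tau>) = (\<pi>2 \<in> fair_shields_cond \<theta> \<psi> \<kappa> n \<tau>)"
  using locality[of \<pi>1 \<tau> \<pi>2, OF assms] by (auto simp: Ecost_cond_def cprob_def fair_shields_cond_def)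

lemma fsc_0: "fair_shields_cond \<theta> \<psi> \<kappa> 0 \<tau> = (if \<psi> \<tau> \<le> \<kappa> then UNIV else {})"
  by (auto simp: fair_shields_cond_def FTc_0)

lemma fsc_Suc: "(\<pi> \<in> fair_shields_cond \<theta> \<psi> \<kappa> (Suc t) \<tau>) \<longleftrightarrow>
   (\<forall>x. \<theta> x > 0 \<longrightarrow> \<pi> \<in> fair_shields_cond \<theta> \<psi> \<kappa> t (\<tau> @ [(x, \<pi> \<tau> x)]))"
  unfolding fair_shields_cond_def mem_Collect_eq
proof (intro iffI allI impI)
  fix x \<tau>'
  assume a: "\<forall>\<tau>'. \<tau>' \<in> FTc \<theta> \<pi> \<tau> (Suc t) \<longrightarrow> \<psi> (\<tau> @ \<tau>') \<le> \<kappa>" and x: "0 < \<theta> x"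
    and l: "\<tau>' \<in> FTc \<theta> \<pi> (\<tau> @ [(x, \<pi> \<tau> x)]) t"
  have "(x, \<pi> \<tau> x) # \<tau>' \<in> FTc \<theta> \<pi> \<tau> (Suc t)" using FTc_Cons[of "(x, \<pi> \<tau> x)" \<tau>'] x l by simp
  from a[rule_format, OF this] show "\<psi> ((\<tau> @ [(x, \<pi> \<tau> x)]) @ \<tau>') \<le> \<kappa>" by simp
next
  fix \<tau>'
  assume a: "\<forall>x. 0 < \<theta> x \<longrightarrow> (\<forall>\<tau>'. \<tau>' \<in> FTc \<theta> \<pi> (\<tau> @ [(x, \<pi> \<tau> x)]) t \<longrightarrow> \<psi> ((\<tau> @ [(x, \<pi> \<tau> x)]) @ \<tau>') \<le> \<kappa>)"
    and l: "\<tau>' \<in> FTc \<theta> \<pi> \<tau> (Suc t)"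
  then obtain p l' where pl: "\<tau>' = p # l'" "\<theta> (fst p) > 0" "snd p = \<pi> \<tau> (fst p)" "l' \<in> FTc \<theta> \<pi> (\<tau> @ [p]) t"
    using FTc_Suc by blast
  obtain x y where p: "p = (x, y)" by (cases p)
  have "\<theta> x > 0" "y = \<pi> \<tau> x" "l' \<in> FTc \<theta> \<pi> (\<tau> @ [(x, \<pi> \<tau> x)]) t" using pl p by auto
  from a[rule_format, OF this(1) this(3)] show "\<psi> (\<tau> @ \<tau>') \<le> \<kappa>" using pl p \<open>y = \<pi> \<tau> x\<close> by simp
qed

lemma Ecost_0: "Ecost_cond C \<theta> \<pi> \<tau> 0 = 0"
  by (simp add: Ecost_cond_def traces_0 cost_def)

lemma FT_FTc: "FT \<theta> \<pi> n = FTc \<theta> \<pi> [] n"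
  by (simp add: FT_def FTc_def)

lemma Ecost_eq: "Ecost C \<theta> \<pi> T = Ecost_cond C \<theta> \<pi> [] T"
  unfolding Ecost_def Ecost_cond_def prob_def cprob_def FT_FTc by simp

lemma fair_eq: "fair_shields \<theta> \<psi> \<kappa> T = fair_shields_cond \<theta> \<psi> \<kappa> T []"
  unfolding fair_shields_def fair_shields_cond_def FT_FTc by (simp add: Ball_def)

lemma single_le_sum_ereal:
  fixes f :: "'a \<Rightarrow> ereal"
  assumes "finite A" "i \<in> A" "\<And>x. x \<in> A \<Longrightarrow> 0 \<le> f x"
  shows "f i \<le> sum f A"
proof -
  have "sum f A = f i + sum f (A - {i})" using assms by (simp add: sum.remove)
  moreover have "0 \<le> sum f (A - {i})" using assms by (intro sum_nonneg) auto
  ultimately show ?thesis by (simp add: add_increasing2)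
qed

locale setting =
  fixes C :: "real set" and \<theta> :: "inp \<Rightarrow> real" and \<psi> :: "trace \<Rightarrow> real" and \<kappa> :: real
  assumes C_fin: "finite C" and C_nonneg: "\<forall>c\<in>C. c \<ge> 0"
    and \<theta>_nonneg: "\<forall>x. \<theta> x \<ge> 0"
    and \<theta>_supp: "\<forall>x. x \<notin> Xs C \<longrightarrow> \<theta> x = 0"
    and \<theta>_sum: "(\<Sum>x\<in>Xs C. \<theta> x) = 1"
begin

lemma finX: "finite (Xs C)" using C_fin by (rule finite_Xs)

lemma th_nn: "\<theta> x \<ge> 0" using \<theta>_nonneg by blast

lemma supp: "\<theta> x > 0 \<Longrightarrow> x \<in> Xs C" using \<theta>_supp by (metis less_irrefl)

lemma decomp:
  "(\<Sum>l\<in>traces C (Suc t). f l * cprob \<theta> \<pi> \<tau> l) =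
   (\<Sum>x\<in>Xs C. \<theta> x * (\<Sum>l\<in>traces C t. f ((x, \<pi> \<tau> x) # l) * cprob \<theta> \<pi> (\<tau> @ [(x, \<pi> \<tau> x)]) l))"
proof -
  have inj: "inj_on (\<lambda>(p,l). p # l) ((Xs C \<times> UNIV) \<times> traces C t)" by (auto simp: inj_on_def)
  have "(\<Sum>l\<in>traces C (Suc t). f l * cprob \<theta> \<pi> \<tau> l) =
     (\<Sum>q\<in>(Xs C \<times> UNIV) \<times> traces C t. f (fst q # snd q) * cprob \<theta> \<pi> \<tau> (fst q # snd q))"
    unfolding traces_Suc by (subst sum.reindex[OF inj]) (simp add: case_prod_beta)
  also have "\<dots> = (\<Sum>p\<in>Xs C \<times> UNIV. \<Sum>l\<in>traces C t. f (p # l) * cprob \<theta> \<pi> \<tau> (p # l))"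
    by (subst sum.cartesian_product) (simp add: case_prod_beta)
  also have "\<dots> = (\<Sum>p\<in>Xs C \<times> UNIV. if snd p = \<pi> \<tau> (fst p) then
       \<theta> (fst p) * (\<Sum>l\<in>traces C t. f (p # l) * cprob \<theta> \<pi> (\<tau> @ [p]) l) else 0)"
    by (rule sum.cong) (auto simp: cprob_Cons[OF \<theta>_nonneg] sum_distrib_left mult_ac)
  also have "\<dots> = (\<Sum>(x,y)\<in>Xs C \<times> UNIV. if y = \<pi> \<tau> x then
       \<theta> x * (\<Sum>l\<in>traces C t. f ((x, y) # l) * cprob \<theta> \<pi> (\<tau> @ [(x, y)]) l) else 0)"
    by (rule sum.cong) auto
  also have "\<dots> = (\<Sum>x\<in>Xs C. \<Sum>y\<in>UNIV. if y = \<pi> \<tau> x then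
       \<theta> x * (\<Sum>l\<in>traces C t. f ((x, y) # l) * cprob \<theta> \<pi> (\<tau> @ [(x, y)]) l) else 0)"
    by (rule sum.cartesian_product[symmetric])
  also have "\<dots> = (\<Sum>x\<in>Xs C. \<theta> x * (\<Sum>l\<in>traces C t. f ((x, \<pi> \<tau> x) # l) * cprob \<theta> \<pi> (\<tau> @ [(x, \<pi> \<tau> x)]) l))"
    by simp
  finally show ?thesis .
qed

lemma mass: "(\<Sum>l\<in>traces C t. cprob \<theta> \<pi> \<tau> l) = 1"
proof (induction t arbitrary: \<tau>)
  case 0
  then show ?case by (simp add: traces_0 cprob_Nil)
next
  case (Suc t)
  show ?case using decomp[where f="\<lambda>_. 1" and t=t and \<pi>=\<pi> and \<tau>=\<tau>] Suc \<theta>_sum by simp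
qed

lemma Ecost_Suc: "Ecost_cond C \<theta> \<pi> \<tau> (Suc t) =
  (\<Sum>x\<in>Xs C. \<theta> x * (dev_cost x (\<pi> \<tau> x) + Ecost_cond C \<theta> \<pi> (\<tau> @ [(x, \<pi> \<tau> x)]) t))"
proof -
  have "\<And>x. (\<Sum>l\<in>traces C t. cost ((x, \<pi> \<tau> x) # l) * cprob \<theta> \<pi> (\<tau> @ [(x, \<pi> \<tau> x)]) l)
     = dev_cost x (\<pi> \<tau> x) + Ecost_cond C \<theta> \<pi> (\<tau> @ [(x, \<pi> \<tau> x)]) t"
  proof -
    fix x
    have "(\<Sum>l\<in>traces C t. cost ((x, \<pi> \<tau> x) # l) * cprob \<theta> \<pi> (\<tau> @ [(x, \<pi> \<tau> x)]) l)
      = (\<Sum>l\<in>traces C t. dev_cost x (\<pi> \<tau> x) * cprob \<theta> \<pi> (\<tau> @ [(x, \<pi> \<tau> x)]) l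
          + cost l * cprob \<theta> \<pi> (\<tau> @ [(x, \<pi> \<tau> x)]) l)"
      by (simp add: cost_Cons distrib_right)
    also have "\<dots> = dev_cost x (\<pi> \<tau> x) * (\<Sum>l\<in>traces C t. cprob \<theta> \<pi> (\<tau> @ [(x, \<pi> \<tau> x)]) l)
        + Ecost_cond C \<theta> \<pi> (\<tau> @ [(x, \<pi> \<tau> x)]) t"
      by (simp add: sum.distrib sum_distrib_left Ecost_cond_def)
    finally show "?thesis x" by (simp add: mass)
  qed
  then show ?thesis unfolding Ecost_cond_def[of C \<theta> \<pi> \<tau>] decomp by simp
qed

lemma Ecost_nonneg: "Ecost_cond C \<theta> \<pi> \<tau> t \<ge> 0"
  unfolding Ecost_cond_def
  by (intro sum_nonneg mult_nonneg_nonneg cost_nonneg[OF C_nonneg] cprob_nonneg[OF \<theta>_nonneg])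

definition W :: "nat \<Rightarrow> trace \<Rightarrow> ereal" where
  "W t \<tau> = (INF \<pi> \<in> fair_shields_cond \<theta> \<psi> \<kappa> t \<tau>. ereal (Ecost_cond C \<theta> \<pi> \<tau> t))"

abbreviation FSC where "FSC t \<tau> \<equiv> fair_shields_cond \<theta> \<psi> \<kappa> t \<tau>"

lemma W_nonneg: "0 \<le> W t \<tau>"
  unfolding W_def by (rule INF_greatest) (simp add: Ecost_nonneg)

lemma W_le: "\<pi> \<in> FSC t \<tau> \<Longrightarrow> W t \<tau> \<le> ereal (Ecost_cond C \<theta> \<pi> \<tau> t)"
  unfolding W_def by (rule INF_lower)

lemma W_fin_ne: "W t \<tau> < \<infinity> \<Longrightarrow> FSC t \<tau> \<noteq> {}"
  unfolding W_def by (auto simp: top_ereal_def[symmetric])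

lemma W_0: "W 0 \<tau> = (if \<psi> \<tau> \<le> \<kappa> then 0 else \<infinity>)"
  unfolding W_def fsc_0 Ecost_0 by (simp add: top_ereal_def)

definition M :: "nat \<Rightarrow> trace \<Rightarrow> inp \<Rightarrow> ereal" where
  "M t \<tau> x = (case x of (g, r, c) \<Rightarrow> min (W t (\<tau> @ [(x, r)])) (W t (\<tau> @ [(x, \<not> r)]) + ereal c))"

lemma M_le: "M t \<tau> x \<le> W t (\<tau> @ [(x, y)]) + ereal (dev_cost x y)"
proof -
  obtain g r c where x: "x = (g, r, c)" by (cases x) auto
  show ?thesis by (cases "y = r") (auto simp: x M_def dev_cost_def)
qed

lemma M_ex: "\<exists>y. M t \<tau> x = W t (\<tau> @ [(x, y)]) + ereal (dev_cost x y)"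
proof -
  obtain g r c where x: "x = (g, r, c)" by (cases x) auto
  show ?thesis
  proof (cases "W t (\<tau> @ [(x, r)]) \<le> W t (\<tau> @ [(x, \<not> r)]) + ereal c")
    case True
    then show ?thesis by (intro exI[of _ r]) (simp add: x M_def dev_cost_def min_def)
  next
    case False
    then show ?thesis by (intro exI[of _ "\<not> r"]) (simp add: x M_def dev_cost_def min_def)
  qed
qed

lemma dev_nonneg: "x \<in> Xs C \<Longrightarrow> dev_cost x y \<ge> 0"
  using C_nonneg by (auto simp: Xs_def dev_cost_def)

lemma M_nonneg: "x \<in> Xs C \<Longrightarrow> M t \<tau> x \<ge> 0"
proof -
  assume x: "x \<in> Xs C"
  obtain y where "M t \<tau> x = W t (\<tau> @ [(x, y)]) + ereal (dev_cost x y)" using M_ex by blast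
  then show ?thesis using W_nonneg[of t "\<tau> @ [(x, y)]"] dev_nonneg[OF x, of y] by simp
qed

definition R :: "nat \<Rightarrow> trace \<Rightarrow> ereal" where
  "R t \<tau> = (\<Sum>x\<in>Xs C. ereal (\<theta> x) * M t \<tau> x)"

lemma R_fin: "R t \<tau> < \<infinity> \<Longrightarrow> \<theta> x > 0 \<Longrightarrow> M t \<tau> x < \<infinity>"
proof -
  assume R: "R t \<tau> < \<infinity>" and th: "\<theta> x > 0"
  have x: "x \<in> Xs C" using supp th .
  have nn: "0 \<le> ereal (\<theta> z) * M t \<tau> z" if "z \<in> Xs C" for z
    using ereal_mult_left_mono[of 0 "M t \<tau> z" "ereal (\<theta> z)"] M_nonneg[OF that] th_nn[of z] by simp
  have "ereal (\<theta> x) * M t \<tau> x \<le> R t \<tau>" unfolding R_def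
    using finX x nn by (intro single_le_sum_ereal)
  then have "ereal (\<theta> x) * M t \<tau> x < \<infinity>" using R by (rule le_less_trans)
  then show ?thesis using th by (cases "M t \<tau> x") auto
qed


lemma rec_ge:
  assumes \<pi>: "\<pi> \<in> FSC (Suc t) \<tau>"
  shows "R t \<tau> \<le> ereal (Ecost_cond C \<theta> \<pi> \<tau> (Suc t))"
proof -
  have "ereal (Ecost_cond C \<theta> \<pi> \<tau> (Suc t)) =
    (\<Sum>x\<in>Xs C. ereal (\<theta> x * (dev_cost x (\<pi> \<tau> x) + Ecost_cond C \<theta> \<pi> (\<tau> @ [(x, \<pi> \<tau> x)]) t)))"
    unfolding Ecost_Suc by simp
  moreover have "R t \<tau> \<le> \<dots>" unfolding R_def
  proof (rule sum_mono)
    fix x assume x: "x \<in> Xs C"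
    show "ereal (\<theta> x) * M t \<tau> x \<le> ereal (\<theta> x * (dev_cost x (\<pi> \<tau> x) + Ecost_cond C \<theta> \<pi> (\<tau> @ [(x, \<pi> \<tau> x)]) t))"
    proof (cases "\<theta> x > 0")
      case True
      then have "\<pi> \<in> FSC t (\<tau> @ [(x, \<pi> \<tau> x)])" using \<pi> fsc_Suc by blast
      then have "W t (\<tau> @ [(x, \<pi> \<tau> x)]) \<le> ereal (Ecost_cond C \<theta> \<pi> (\<tau> @ [(x, \<pi> \<tau> x)]) t)" by (rule W_le)
      then have "M t \<tau> x \<le> ereal (Ecost_cond C \<theta> \<pi> (\<tau> @ [(x, \<pi> \<tau> x)]) t) + ereal (dev_cost x (\<pi> \<tau> x))"
        using M_le[of t \<tau> x "\<pi> \<tau> x"] by (meson add_right_mono order_trans)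
      then have "M t \<tau> x \<le> ereal (dev_cost x (\<pi> \<tau> x) + Ecost_cond C \<theta> \<pi> (\<tau> @ [(x, \<pi> \<tau> x)]) t)"
        by (simp add: add.commute)
      from ereal_mult_left_mono[OF this, of "ereal (\<theta> x)"] show ?thesis using th_nn[of x] by simp
    next
      case False
      then have "\<theta> x = 0" using th_nn[of x] by linarith
      then show ?thesis by (simp add: zero_ereal_def[symmetric])
    qed
  qed
  ultimately show ?thesis by simp
qed

lemma R_le_W: "R t \<tau> \<le> W (Suc t) \<tau>"
  unfolding W_def by (rule INF_greatest) (rule rec_ge)

lemma combine:
  assumes "\<forall>x\<in>Xs C. \<theta> x > 0 \<longrightarrow> \<pi> \<in> FSC t (\<tau> @ [(x, \<pi> \<tau> x)]) \<and>
     ereal (Ecost_cond C \<theta> \<pi> (\<tau> @ [(x, \<pi> \<tau> x)]) t) + ereal (dev_cost x (\<pi> \<tau> x)) = M t \<tau> x"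
  shows "\<pi> \<in> FSC (Suc t) \<tau> \<and> ereal (Ecost_cond C \<theta> \<pi> \<tau> (Suc t)) = R t \<tau>"
proof
  show "\<pi> \<in> FSC (Suc t) \<tau>" unfolding fsc_Suc using assms supp by blast
  have "ereal (Ecost_cond C \<theta> \<pi> \<tau> (Suc t)) =
    (\<Sum>x\<in>Xs C. ereal (\<theta> x * (dev_cost x (\<pi> \<tau> x) + Ecost_cond C \<theta> \<pi> (\<tau> @ [(x, \<pi> \<tau> x)]) t)))"
    unfolding Ecost_Suc by simp
  also have "\<dots> = R t \<tau>" unfolding R_def
  proof (rule sum.cong)
    fix x assume x: "x \<in> Xs C"
    show "ereal (\<theta> x * (dev_cost x (\<pi> \<tau> x) + Ecost_cond C \<theta> \<pi> (\<tau> @ [(x, \<pi> \<tau> x)]) t)) = ereal (\<theta> x) * M t \<tau> x"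
    proof (cases "\<theta> x > 0")
      case True
      then have "ereal (Ecost_cond C \<theta> \<pi> (\<tau> @ [(x, \<pi> \<tau> x)]) t) + ereal (dev_cost x (\<pi> \<tau> x)) = M t \<tau> x"
        using assms x by blast
      then have "M t \<tau> x = ereal (dev_cost x (\<pi> \<tau> x) + Ecost_cond C \<theta> \<pi> (\<tau> @ [(x, \<pi> \<tau> x)]) t)"
        by (simp add: add.commute)
      then show ?thesis by (metis times_ereal.simps(1))
    next
      case False
      then have "\<theta> x = 0" using th_nn[of x] by linarith
      then show ?thesis by (simp add: zero_ereal_def[symmetric])
    qed
  qed simp
  finally show "ereal (Ecost_cond C \<theta> \<pi> \<tau> (Suc t)) = R t \<tau>" .
qed

definition att :: "nat \<Rightarrow> bool" where
  "att t = (\<forall>\<tau>. FSC t \<tau> \<noteq> {} \<longrightarrow> (\<exists>\<pi>\<in>FSC t \<tau>. ereal (Ecost_cond C \<theta> \<pi> \<tau> t) = W t \<tau>))"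

lemma W_fin_sum: "a + ereal d < \<infinity> \<Longrightarrow> a < \<infinity>"
  by (cases a) auto

lemma construct:
  assumes A: "att t" and Rf: "R t \<tau> < \<infinity>"
  shows "\<exists>\<pi>. \<pi> \<in> FSC (Suc t) \<tau> \<and> ereal (Ecost_cond C \<theta> \<pi> \<tau> (Suc t)) = R t \<tau>"
proof -
  define yx where "yx x = (SOME y. M t \<tau> x = W t (\<tau> @ [(x, y)]) + ereal (dev_cost x y))" for x
  have yx: "M t \<tau> x = W t (\<tau> @ [(x, yx x)]) + ereal (dev_cost x (yx x))" for x
    unfolding yx_def by (rule someI_ex) (rule M_ex)
  define px where "px x = (SOME \<pi>. \<pi> \<in> FSC t (\<tau> @ [(x, yx x)]) \<and>
      ereal (Ecost_cond C \<theta> \<pi> (\<tau> @ [(x, yx x)]) t) = W t (\<tau> @ [(x, yx x)]))" for x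
  have px: "px x \<in> FSC t (\<tau> @ [(x, yx x)]) \<and>
      ereal (Ecost_cond C \<theta> (px x) (\<tau> @ [(x, yx x)]) t) = W t (\<tau> @ [(x, yx x)])" if th: "\<theta> x > 0" for x
  proof -
    have "M t \<tau> x < \<infinity>" using R_fin[OF Rf th] .
    then have "W t (\<tau> @ [(x, yx x)]) < \<infinity>" using yx[of x] W_fin_sum by metis
    then have "FSC t (\<tau> @ [(x, yx x)]) \<noteq> {}" by (rule W_fin_ne)
    then have "\<exists>\<pi>\<in>FSC t (\<tau> @ [(x, yx x)]). ereal (Ecost_cond C \<theta> \<pi> (\<tau> @ [(x, yx x)]) t) = W t (\<tau> @ [(x, yx x)])"
      using A unfolding att_def by blast
    then obtain \<pi> where "\<pi> \<in> FSC t (\<tau> @ [(x, yx x)]) \<and> ereal (Ecost_cond C \<theta> \<pi> (\<tau> @ [(x, yx x)]) t) = W t (\<tau> @ [(x, yx x)])"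
      by blast
    then have "\<exists>\<pi>. \<pi> \<in> FSC t (\<tau> @ [(x, yx x)]) \<and> ereal (Ecost_cond C \<theta> \<pi> (\<tau> @ [(x, yx x)]) t) = W t (\<tau> @ [(x, yx x)])"
      by blast
    then show ?thesis unfolding px_def by (rule someI_ex)
  qed
  define ps :: shield where "ps h z = (if h = \<tau> then yx z else px (fst (h ! length \<tau>)) h z)" for h z
  have loc: "ps ((\<tau> @ [(x, yx x)]) @ h) z = px x ((\<tau> @ [(x, yx x)]) @ h) z" for x h z
    unfolding ps_def by simp
  have ps\<tau>: "ps \<tau> x = yx x" for x unfolding ps_def by simp
  have "ps \<in> FSC (Suc t) \<tau> \<and> ereal (Ecost_cond C \<theta> ps \<tau> (Suc t)) = R t \<tau>"
  proof (rule combine, intro ballI impI)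
    fix x assume x: "x \<in> Xs C" and th: "\<theta> x > 0"
    have e1: "Ecost_cond C \<theta> ps (\<tau> @ [(x, yx x)]) t = Ecost_cond C \<theta> (px x) (\<tau> @ [(x, yx x)]) t"
      and e2: "(ps \<in> FSC t (\<tau> @ [(x, yx x)])) = (px x \<in> FSC t (\<tau> @ [(x, yx x)]))"
      using locality_Ecost[of ps "\<tau> @ [(x, yx x)]" "px x", OF loc] by blast+
    show "ps \<in> FSC t (\<tau> @ [(x, ps \<tau> x)]) \<and>
      ereal (Ecost_cond C \<theta> ps (\<tau> @ [(x, ps \<tau> x)]) t) + ereal (dev_cost x (ps \<tau> x)) = M t \<tau> x"
      unfolding ps\<tau> e1 e2 using px[OF th] yx[of x] by simp
  qed
  then show ?thesis by blast
qed

lemma att_all: "att t"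
proof (induction t)
  case 0
  show ?case unfolding att_def W_0 fsc_0 Ecost_0 by simp
next
  case (Suc t)
  show ?case unfolding att_def
  proof (intro allI impI)
    fix \<tau> assume ne: "FSC (Suc t) \<tau> \<noteq> {}"
    then obtain \<pi>0 where \<pi>0: "\<pi>0 \<in> FSC (Suc t) \<tau>" by blast
    have "R t \<tau> < \<infinity>" using le_less_trans[OF rec_ge[OF \<pi>0], of \<infinity>] by simp
    then obtain \<pi> where \<pi>: "\<pi> \<in> FSC (Suc t) \<tau>" "ereal (Ecost_cond C \<theta> \<pi> \<tau> (Suc t)) = R t \<tau>"
      using construct[OF Suc] by blast
    have "W (Suc t) \<tau> \<le> R t \<tau>" using W_le[OF \<pi>(1)] \<pi>(2) by simp
    then have "ereal (Ecost_cond C \<theta> \<pi> \<tau> (Suc t)) = W (Suc t) \<tau>" using R_le_W[of t \<tau>] \<pi>(2) by simp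
    then show "\<exists>\<pi>\<in>FSC (Suc t) \<tau>. ereal (Ecost_cond C \<theta> \<pi> \<tau> (Suc t)) = W (Suc t) \<tau>" using \<pi>(1) by blast
  qed
qed

lemma W_Suc: "W (Suc t) \<tau> = R t \<tau>"
proof (cases "R t \<tau> < \<infinity>")
  case True
  then obtain \<pi> where \<pi>: "\<pi> \<in> FSC (Suc t) \<tau>" "ereal (Ecost_cond C \<theta> \<pi> \<tau> (Suc t)) = R t \<tau>"
    using construct[OF att_all] by blast
  have "W (Suc t) \<tau> \<le> R t \<tau>" using W_le[OF \<pi>(1)] \<pi>(2) by simp
  then show ?thesis using R_le_W[of t \<tau>] by simp
next
  case False
  then have "R t \<tau> = \<infinity>" by simp
  then show ?thesis using R_le_W[of t \<tau>] by simp
qed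


lemma opt:
  assumes H: "\<And>\<tau> x y. length \<tau> < T \<Longrightarrow> set \<tau> \<subseteq> Xs C \<times> UNIV \<Longrightarrow> x \<in> Xs C \<Longrightarrow>
     W (T - Suc (length \<tau>)) (\<tau> @ [(x, \<pi>s \<tau> x)]) + ereal (dev_cost x (\<pi>s \<tau> x))
       \<le> W (T - Suc (length \<tau>)) (\<tau> @ [(x, y)]) + ereal (dev_cost x y)"
  shows "length \<tau> + t = T \<Longrightarrow> set \<tau> \<subseteq> Xs C \<times> UNIV \<Longrightarrow> W t \<tau> < \<infinity> \<Longrightarrow>
     \<pi>s \<in> FSC t \<tau> \<and> ereal (Ecost_cond C \<theta> \<pi>s \<tau> t) = W t \<tau>"
proof (induction t arbitrary: \<tau>)
  case 0
  then have "\<psi> \<tau> \<le> \<kappa>" using W_0[of \<tau>] by (auto split: if_splits)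
  then show ?case by (simp add: fsc_0 Ecost_0 W_0)
next
  case (Suc t)
  have lt: "length \<tau> < T" and tt: "T - Suc (length \<tau>) = t" using Suc.prems(1) by auto
  have Rf: "R t \<tau> < \<infinity>" using Suc.prems(3) W_Suc by simp
  have "\<pi>s \<in> FSC (Suc t) \<tau> \<and> ereal (Ecost_cond C \<theta> \<pi>s \<tau> (Suc t)) = R t \<tau>"
  proof (rule combine, intro ballI impI)
    fix x assume x: "x \<in> Xs C" and th: "\<theta> x > 0"
    have Mf: "M t \<tau> x < \<infinity>" by (rule R_fin[OF Rf th])
    obtain y0 where y0: "M t \<tau> x = W t (\<tau> @ [(x, y0)]) + ereal (dev_cost x y0)" using M_ex by blast
    have "W t (\<tau> @ [(x, \<pi>s \<tau> x)]) + ereal (dev_cost x (\<pi>s \<tau> x)) \<le> M t \<tau> x"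
      using H[OF lt Suc.prems(2) x, of y0] y0 unfolding tt by simp
    then have eq: "W t (\<tau> @ [(x, \<pi>s \<tau> x)]) + ereal (dev_cost x (\<pi>s \<tau> x)) = M t \<tau> x"
      using M_le[of t \<tau> x "\<pi>s \<tau> x"] by (rule antisym)
    then have "W t (\<tau> @ [(x, \<pi>s \<tau> x)]) < \<infinity>" using Mf W_fin_sum by metis
    moreover have "length (\<tau> @ [(x, \<pi>s \<tau> x)]) + t = T" using Suc.prems(1) by simp
    moreover have "set (\<tau> @ [(x, \<pi>s \<tau> x)]) \<subseteq> Xs C \<times> UNIV" using Suc.prems(2) x by auto
    ultimately have ih: "\<pi>s \<in> FSC t (\<tau> @ [(x, \<pi>s \<tau> x)]) \<and>
        ereal (Ecost_cond C \<theta> \<pi>s (\<tau> @ [(x, \<pi>s \<tau> x)]) t) = W t (\<tau> @ [(x, \<pi>s \<tau> x)])"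
      using Suc.IH by blast
    then show "\<pi>s \<in> FSC t (\<tau> @ [(x, \<pi>s \<tau> x)]) \<and>
        ereal (Ecost_cond C \<theta> \<pi>s (\<tau> @ [(x, \<pi>s \<tau> x)]) t) + ereal (dev_cost x (\<pi>s \<tau> x)) = M t \<tau> x"
      using eq by simp
  qed
  then show ?case using W_Suc by simp
qed

end

theorem lemma6p1:
  fixes C :: "real set" and \<theta> :: "inp \<Rightarrow> real" and \<psi> :: "trace \<Rightarrow> real"
    and \<kappa> :: real and T :: nat
  assumes C_fin: "finite C" and C_nonneg: "\<forall>c\<in>C. c \<ge> 0"
    and \<theta>_nonneg: "\<forall>x. \<theta> x \<ge> 0"
    and \<theta>_supp: "\<forall>x. x \<notin> Xs C \<longrightarrow> \<theta> x = 0"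
    and \<theta>_sum: "(\<Sum>x\<in>Xs C. \<theta> x) = 1"
    and \<kappa>_pos: "\<kappa> > 0" and T_pos: "T > 0"
  shows
    "(\<forall>\<tau>. length \<tau> = T \<and> set \<tau> \<subseteq> Xs C \<times> UNIV \<longrightarrow>
        val C \<theta> \<psi> \<kappa> T \<tau> = (if \<psi> \<tau> \<le> \<kappa> then 0 else \<infinity>))
   \<and> (\<forall>\<tau>. length \<tau> < T \<and> set \<tau> \<subseteq> Xs C \<times> UNIV \<longrightarrow>
        val C \<theta> \<psi> \<kappa> T \<tau> =
          (\<Sum>x\<in>Xs C. ereal (\<theta> x) *
             (case x of (g, r, c) \<Rightarrow>
                min (val C \<theta> \<psi> \<kappa> T (\<tau> @ [(x, r)]))
                    (val C \<theta> \<psi> \<kappa> T (\<tau> @ [(x, \<not> r)]) + ereal c))))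
   \<and> (\<forall>\<pi>s :: shield.
        (\<forall>\<tau> x. length \<tau> < T \<and> set \<tau> \<subseteq> Xs C \<times> UNIV \<and> x \<in> Xs C \<longrightarrow>
           (\<forall>y. val C \<theta> \<psi> \<kappa> T (\<tau> @ [(x, \<pi>s \<tau> x)]) + ereal (dev_cost x (\<pi>s \<tau> x))
                \<le> val C \<theta> \<psi> \<kappa> T (\<tau> @ [(x, y)]) + ereal (dev_cost x y)))
        \<longrightarrow> fair_shields \<theta> \<psi> \<kappa> T \<noteq> {}
        \<longrightarrow> \<pi>s \<in> fair_shields \<theta> \<psi> \<kappa> T
            \<and> (\<forall>\<pi>\<in>fair_shields \<theta> \<psi> \<kappa> T. Ecost C \<theta> \<pi>s T \<le> Ecost C \<theta> \<pi> T))"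
proof -
  interpret S: setting C \<theta> \<psi> \<kappa>
    using C_fin C_nonneg \<theta>_nonneg \<theta>_supp \<theta>_sum by unfold_locales
  have val_eq: "val C \<theta> \<psi> \<kappa> T \<tau> = S.W (T - length \<tau>) \<tau>" for \<tau>
    by (simp add: val_def S.W_def)
  have P1: "\<forall>\<tau>. length \<tau> = T \<and> set \<tau> \<subseteq> Xs C \<times> UNIV \<longrightarrow>
        val C \<theta> \<psi> \<kappa> T \<tau> = (if \<psi> \<tau> \<le> \<kappa> then 0 else \<infinity>)"
    by (simp add: val_eq S.W_0)
  have P2: "\<forall>\<tau>. length \<tau> < T \<and> set \<tau> \<subseteq> Xs C \<times> UNIV \<longrightarrow>
        val C \<theta> \<psi> \<kappa> T \<tau> =
          (\<Sum>x\<in>Xs C. ereal (\<theta> x) *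
             (case x of (g, r, c) \<Rightarrow>
                min (val C \<theta> \<psi> \<kappa> T (\<tau> @ [(x, r)]))
                    (val C \<theta> \<psi> \<kappa> T (\<tau> @ [(x, \<not> r)]) + ereal c)))"
  proof (intro allI impI)
    fix \<tau> :: trace assume a: "length \<tau> < T \<and> set \<tau> \<subseteq> Xs C \<times> UNIV"
    then have tt: "T - length \<tau> = Suc (T - Suc (length \<tau>))" by (simp add: Suc_diff_Suc)
    show "val C \<theta> \<psi> \<kappa> T \<tau> =
          (\<Sum>x\<in>Xs C. ereal (\<theta> x) *
             (case x of (g, r, c) \<Rightarrow>
                min (val C \<theta> \<psi> \<kappa> T (\<tau> @ [(x, r)]))
                    (val C \<theta> \<psi> \<kappa> T (\<tau> @ [(x, \<not> r)]) + ereal c)))"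
      unfolding val_eq tt S.W_Suc S.R_def S.M_def by simp
  qed
  have P3: "\<forall>\<pi>s :: shield.
        (\<forall>\<tau> x. length \<tau> < T \<and> set \<tau> \<subseteq> Xs C \<times> UNIV \<and> x \<in> Xs C \<longrightarrow>
           (\<forall>y. val C \<theta> \<psi> \<kappa> T (\<tau> @ [(x, \<pi>s \<tau> x)]) + ereal (dev_cost x (\<pi>s \<tau> x))
                \<le> val C \<theta> \<psi> \<kappa> T (\<tau> @ [(x, y)]) + ereal (dev_cost x y)))
        \<longrightarrow> fair_shields \<theta> \<psi> \<kappa> T \<noteq> {}
        \<longrightarrow> \<pi>s \<in> fair_shields \<theta> \<psi> \<kappa> T
            \<and> (\<forall>\<pi>\<in>fair_shields \<theta> \<psi> \<kappa> T. Ecost C \<theta> \<pi>s T \<le> Ecost C \<theta> \<pi> T)"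
  proof (intro allI impI)
    fix \<pi>s :: shield
    assume Hv: "\<forall>\<tau> x. length \<tau> < T \<and> set \<tau> \<subseteq> Xs C \<times> UNIV \<and> x \<in> Xs C \<longrightarrow>
           (\<forall>y. val C \<theta> \<psi> \<kappa> T (\<tau> @ [(x, \<pi>s \<tau> x)]) + ereal (dev_cost x (\<pi>s \<tau> x))
                \<le> val C \<theta> \<psi> \<kappa> T (\<tau> @ [(x, y)]) + ereal (dev_cost x y))"
      and ne: "fair_shields \<theta> \<psi> \<kappa> T \<noteq> {}"
    have H: "S.W (T - Suc (length \<tau>)) (\<tau> @ [(x, \<pi>s \<tau> x)]) + ereal (dev_cost x (\<pi>s \<tau> x))
       \<le> S.W (T - Suc (length \<tau>)) (\<tau> @ [(x, y)]) + ereal (dev_cost x y)"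
      if "length \<tau> < T" "set \<tau> \<subseteq> Xs C \<times> UNIV" "x \<in> Xs C" for \<tau> x y
    proof -
      have "val C \<theta> \<psi> \<kappa> T (\<tau> @ [(x, \<pi>s \<tau> x)]) + ereal (dev_cost x (\<pi>s \<tau> x))
                \<le> val C \<theta> \<psi> \<kappa> T (\<tau> @ [(x, y)]) + ereal (dev_cost x y)"
        using Hv that by blast
      then show ?thesis unfolding val_eq by simp
    qed
    obtain \<pi>0 where \<pi>0: "\<pi>0 \<in> S.FSC T []" using ne unfolding fair_eq by blast
    have "S.W T [] < \<infinity>" using le_less_trans[OF S.W_le[OF \<pi>0], of \<infinity>] by simp
    then have r: "\<pi>s \<in> S.FSC T [] \<and> ereal (Ecost_cond C \<theta> \<pi>s [] T) = S.W T []"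
      using S.opt[of T \<pi>s, OF H, of "[]" T] by simp
    show "\<pi>s \<in> fair_shields \<theta> \<psi> \<kappa> T \<and> (\<forall>\<pi>\<in>fair_shields \<theta> \<psi> \<kappa> T. Ecost C \<theta> \<pi>s T \<le> Ecost C \<theta> \<pi> T)"
    proof (intro conjI ballI)
      show "\<pi>s \<in> fair_shields \<theta> \<psi> \<kappa> T" using r fair_eq by blast
    next
      fix \<pi> assume "\<pi> \<in> fair_shields \<theta> \<psi> \<kappa> T"
      then have "S.W T [] \<le> ereal (Ecost_cond C \<theta> \<pi> [] T)" using S.W_le fair_eq by blast
      then have "ereal (Ecost_cond C \<theta> \<pi>s [] T) \<le> ereal (Ecost_cond C \<theta> \<pi> [] T)" using r by simp
      then show "Ecost C \<theta> \<pi>s T \<le> Ecost C \<theta> \<pi> T" by (simp add: Ecost_eq)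
    qed
  qed
  show ?thesis using P1 P2 P3 by blast
qed

end
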